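(* For a word $w\in\mathcal{A}^*$ let $\iota(w)$ denote the word obtained from $w$ by deleting every occurrence of every letter that occurs more than once in $w$ (so $\iota(w)$ is the subsequence of letters occurring exactly once, in their order in $w$); this depends only on the element of ${\mathsf{stal}}$ represented by $w$. (1) Two elements $s,t\in{\mathsf{stal}}$ lie in the same connected component of $K({\mathsf{stal}})$ if and only if $s\equiv_{\mathrm{ev}}t$ and $\iota(s)$ and $\iota(t)$ are cyclic rotations of each other as words (i.e. $\iota(s)=pq$ and $\iota(t)=qp$ for some words $p,q$). (2) The maximum diameter of a connected component of $K({\mathsf{stal}})$ is $3$. (3) The maximum diameter of a connected component of $K({\mathsf{stal}}_n)$ is $3$ if $n\ge3$, is $1$ if $n=2$, and is $0$ if $n=1$.
   Context: Let $\mathcal{A}=\{1<2<3<\cdots\}$ be the ordered alphabet of positive integers and $\mathcal{A}_n=\{1<2<\cdots<n\}$. For a monoid $M$ and $s,t\in M$, write $s\sim t$ if there exist $x,y\in M$ with $s=xy$ and $t=yx$ (a cyclic shift); $\sim^*$ is the reflexive–transitive closure of $\sim$. The cyclic shift graph $K(M)$ is the undirected graph with vertex set $M$ and an edge between $s$ and $t$ iff $s\sim t$; its connected components are the $\sim^*$-classes, and distances/diameters are graph distances in $K(M)$. The evaluation of a word $w$ is the tuple $(|w|_a)_{a}$ giving the number of occurrences of each letter $a$; all monoids considered are defined by presentations whose defining relations preserve evaluation, so the evaluation of an element is well defined, and $s\equiv_{\mathrm{ev}} t$ means $s$ and $t$ have the same evaluation. The stalactic monoid ${\mathsf{stal}}$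 is $\mathcal{A}^*$ modulo the congruence generated by the relations $bavb=abvb$ for all letters $a,b$ and words $v\in\mathcal{A}^*$; ${\mathsf{stal}}_n$ is defined by the same relations over $\mathcal{A}_n$. Equivalently, two words are equal in ${\mathsf{stal}}$ iff they have the same evaluation and the same order of rightmost occurrences of their letters. *)

theory Defs
  imports Main
begin

text \<open>The stalactic monoid over \<open>\<Sigma>\<close> is the quotient of \<open>lists \<Sigma>\<close> by the congruence
  generated by the relations \<open>b a v b = a b v b\<close> (a, b letters, v a word).
  Its elements are represented as equivalence classes (sets of words).\<close>

definition stal_step :: "nat set \<Rightarrow> nat list \<Rightarrow> nat list \<Rightarrow> bool" where
  "stal_step \<Sigma> u w \<longleftrightarrow> (\<exists>a\<in>\<Sigma>. \<exists>b\<in>\<Sigma>. \<exists>p\<in>lists \<Sigma>. \<exists>v\<in>lists \<Sigma>. \<exists>q\<in>lists \<Sigma>.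
      u = p @ [b, a] @ v @ [b] @ q \<and> w = p @ [a, b] @ v @ [b] @ q)"

definition stal_eq :: "nat set \<Rightarrow> nat list \<Rightarrow> nat list \<Rightarrow> bool" where
  "stal_eq \<Sigma> = equivclp (stal_step \<Sigma>)"

definition stal_class :: "nat set \<Rightarrow> nat list \<Rightarrow> nat list set" where
  "stal_class \<Sigma> w = {v. stal_eq \<Sigma> w v}"

definition stal_elems :: "nat set \<Rightarrow> nat list set set" where
  "stal_elems \<Sigma> = stal_class \<Sigma> ` lists \<Sigma>"

text \<open>Cyclic shift relation: \<open>s \<sim> t\<close> iff \<open>s = xy\<close>, \<open>t = yx\<close> for elements x, y
  (the product of classes [x][y] is the class [xy]).\<close>
definition cshift :: "nat set \<Rightarrow> nat list set \<Rightarrow> nat list set \<Rightarrow> bool" where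
  "cshift \<Sigma> s t \<longleftrightarrow> (\<exists>x\<in>lists \<Sigma>. \<exists>y\<in>lists \<Sigma>.
      s = stal_class \<Sigma> (x @ y) \<and> t = stal_class \<Sigma> (y @ x))"

definition K_conn :: "nat set \<Rightarrow> nat list set \<Rightarrow> nat list set \<Rightarrow> bool" where
  "K_conn \<Sigma> s t \<longleftrightarrow> (cshift \<Sigma>)\<^sup>*\<^sup>* s t"

text \<open>Graph distance in K(M) (meaningful for connected pairs).\<close>
definition K_dist :: "nat set \<Rightarrow> nat list set \<Rightarrow> nat list set \<Rightarrow> nat" where
  "K_dist \<Sigma> s t = (LEAST k. (cshift \<Sigma> ^^ k) s t)"

definition max_comp_diam :: "nat set \<Rightarrow> nat \<Rightarrow> bool" where
  "max_comp_diam \<Sigma> d \<longleftrightarrow>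
     (\<forall>s\<in>stal_elems \<Sigma>. \<forall>t\<in>stal_elems \<Sigma>. K_conn \<Sigma> s t \<longrightarrow> K_dist \<Sigma> s t \<le> d) \<and>
     (\<exists>s\<in>stal_elems \<Sigma>. \<exists>t\<in>stal_elems \<Sigma>. K_conn \<Sigma> s t \<and> K_dist \<Sigma> s t = d)"

definition alphA :: "nat set" where "alphA = {a. 1 \<le> a}"
definition alphAn :: "nat \<Rightarrow> nat set" where "alphAn n = {1..n}"

definition iota :: "nat list \<Rightarrow> nat list" where
  "iota w = filter (\<lambda>a. count_list w a = 1) w"

end

theory Submission
  imports Defs
begin


lemma count_list_replicate[simp]: "count_list (replicate n b) a = (if a = b then n else 0)"
  by (induction n) auto

lemma count_list_filter: "count_list (filter P xs) a = (if P a then count_list xs a else 0)"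
  by (induction xs) auto

lemma count_list_distinct: "distinct xs \<Longrightarrow> count_list xs a = (if a \<in> set xs then 1 else 0)"
  by (induction xs) auto

lemma count_list_concat_rep:
  "distinct xs \<Longrightarrow> count_list (concat (map (\<lambda>b. replicate (f b) b) xs)) a = (if a \<in> set xs then f a else 0)"
  by (induction xs) auto

lemma remdups_app: "remdups (xs @ ys) = filter (\<lambda>x. x \<notin> set ys) (remdups xs) @ remdups ys"
  by (induction xs) auto

lemma step_inv: "stal_step S u v \<Longrightarrow> count_list u = count_list v \<and> remdups u = remdups v"
proof -
  assume "stal_step S u v"
  then obtain a b p vv q where u: "u = p @ [b, a] @ vv @ [b] @ q" and v: "v = p @ [a, b] @ vv @ [b] @ q"
    unfolding stal_step_def by blast
  have "remdups ([b, a] @ vv @ [b] @ q) = remdups ([a, b] @ vv @ [b] @ q)" by auto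
  moreover have "set ([b, a] @ vv @ [b] @ q) = set ([a, b] @ vv @ [b] @ q)" by auto
  ultimately have "remdups u = remdups v" unfolding u v by (metis remdups_app)
  moreover have "count_list u = count_list v" unfolding u v by auto
  ultimately show ?thesis by simp
qed

lemma eq_inv: "stal_eq S u v \<Longrightarrow> count_list u = count_list v \<and> remdups u = remdups v"
  unfolding stal_eq_def
  by (induction rule: equivclp_induct) (auto dest: step_inv)

lemma step_cons: "stal_step S u v \<Longrightarrow> c \<in> S \<Longrightarrow> stal_step S (c # u) (c # v)"
  unfolding stal_step_def
  by (metis Cons_in_lists_iff append_Cons)

lemma eq_cons: "stal_eq S u v \<Longrightarrow> c \<in> S \<Longrightarrow> stal_eq S (c # u) (c # v)"
  unfolding stal_eq_def
proof (induction rule: equivclp_induct)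
  case base then show ?case by simp
next
  case (step y z)
  then show ?case by (meson equivclp_into_equivclp step_cons)
qed

lemma eq_move: "B \<in> lists S \<Longrightarrow> r \<in> lists S \<Longrightarrow> a \<in> S \<Longrightarrow> a \<in> set r \<Longrightarrow>
  stal_eq S (a # B @ r) (B @ a # r)"
proof (induction B)
  case Nil then show ?case by (simp add: stal_eq_def)
next
  case (Cons c B)
  have "a \<in> set (B @ r)" using Cons by simp
  then obtain vv q where vq: "B @ r = vv @ a # q" by (meson split_list)
  have "vv \<in> lists S" "q \<in> lists S" using Cons vq
    by (metis Cons_in_lists_iff append_in_lists_conv in_listsD in_listsI)+
  have "stal_step S (a # c # B @ r) (c # a # B @ r)"
    unfolding stal_step_def
    apply (rule bexI[of _ c], rule bexI[of _ a], rule bexI[of _ "[]"], rule bexI[of _ vv], rule bexI[of _ q])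
    using Cons vq \<open>vv \<in> lists S\<close> \<open>q \<in> lists S\<close> by auto
  moreover have "stal_eq S (c # a # B @ r) (c # B @ a # r)"
    using Cons by (intro eq_cons) auto
  ultimately show ?case unfolding stal_eq_def
    by (metis append_Cons equivclp_trans r_into_equivclp)
qed

definition nf :: "nat list \<Rightarrow> nat list" where
  "nf w = concat (map (\<lambda>a. replicate (count_list w a) a) (remdups w))"

lemma eq_nf: "w \<in> lists S \<Longrightarrow> stal_eq S w (nf w)"
proof (induction w)
  case Nil then show ?case by (simp add: stal_eq_def nf_def)
next
  case (Cons a w)
  have IH: "stal_eq S (a # w) (a # nf w)" using Cons by (intro eq_cons) auto
  show ?case
  proof (cases "a \<in> set w")
    case False
    have e: "concat (map (\<lambda>b. replicate (count_list (a # w) b) b) (remdups w)) = nf w"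
      unfolding nf_def by (rule arg_cong[where f=concat], rule map_cong[OF refl]) (use False in auto)
    have f: "nf (a # w) = replicate (count_list (a # w) a) a @ concat (map (\<lambda>b. replicate (count_list (a # w) b) b) (remdups w))"
      using False by (simp add: nf_def del: count_list.simps)
    have "count_list (a # w) a = 1" using False by simp
    then have "nf (a # w) = a # nf w" using e f by simp
    then show ?thesis using IH by simp
  next
    case True
    then have "a \<in> set (remdups w)" by simp
    then obtain R1 R2 where R: "remdups w = R1 @ a # R2" by (meson split_list)
    have d: "distinct (R1 @ a # R2)" using R by (metis distinct_remdups)
    define blk where "blk = (\<lambda>b. replicate (count_list w b) b)"
    define B where "B = concat (map blk R1)"
    define rest where "rest = concat (map blk R2)"
    have nfw: "nf w = B @ replicate (count_list w a) a @ rest"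
      by (simp add: nf_def R B_def rest_def blk_def)
    have m1: "map (\<lambda>b. replicate (count_list (a # w) b) b) R1 = map blk R1"
      using d by (intro map_cong) (auto simp: blk_def)
    have m2: "map (\<lambda>b. replicate (count_list (a # w) b) b) R2 = map blk R2"
      using d by (intro map_cong) (auto simp: blk_def)
    have nfaw: "nf (a # w) = B @ replicate (Suc (count_list w a)) a @ rest"
    proof -
      have n0: "nf (a # w) = concat (map (\<lambda>b. replicate (count_list (a # w) b) b) R1) @ replicate (count_list (a # w) a) a @ concat (map (\<lambda>b. replicate (count_list (a # w) b) b) R2)"
        using True by (simp add: nf_def R del: count_list.simps)
      show ?thesis unfolding n0 m1 m2 B_def rest_def by simp
    qed
    have cpos: "count_list w a > 0" using True
      by (metis count_list_0_iff gr0I)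
    have Bl: "B \<in> lists S"
    proof -
      have "set B \<subseteq> set w" unfolding B_def blk_def using R
        by (auto, metis Un_iff set_append set_remdups)
      then show ?thesis using Cons by auto
    qed
    have rl: "replicate (count_list w a) a @ rest \<in> lists S"
    proof -
      have "set rest \<subseteq> set w" unfolding rest_def blk_def using R
        by (auto, metis Un_iff list.set_intros(2) set_append set_remdups)
      then show ?thesis using Cons True by auto
    qed
    have "stal_eq S (a # B @ (replicate (count_list w a) a @ rest)) (B @ a # (replicate (count_list w a) a @ rest))"
      using eq_move[OF Bl rl] Cons cpos by auto
    then show ?thesis using IH nfw nfaw unfolding stal_eq_def
      by (metis append_Cons equivclp_trans replicate_Suc)
  qed
qed

lemma nf_inv: "count_list u = count_list v \<Longrightarrow> remdups u = remdups v \<Longrightarrow> nf u = nf v"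
  by (simp add: nf_def)

lemma class_eq_iff: "u \<in> lists S \<Longrightarrow> v \<in> lists S \<Longrightarrow>
  stal_class S u = stal_class S v \<longleftrightarrow> (count_list u = count_list v \<and> remdups u = remdups v)"
proof
  assume "stal_class S u = stal_class S v"
  then have "stal_eq S u v" unfolding stal_class_def stal_eq_def
    by (metis equivclp_refl mem_Collect_eq)
  then show "count_list u = count_list v \<and> remdups u = remdups v" by (rule eq_inv)
next
  assume u: "u \<in> lists S" and v: "v \<in> lists S" and "count_list u = count_list v \<and> remdups u = remdups v"
  then have "nf u = nf v" using nf_inv by blast
  then have "stal_eq S u v" using eq_nf[OF u] eq_nf[OF v] unfolding stal_eq_def
    by (metis equivclp_sym equivclp_trans)
  then show "stal_class S u = stal_class S v" unfolding stal_class_def stal_eq_def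
    by (auto intro: equivclp_trans equivclp_sym)
qed

lemma class_eq_inv: "stal_class S u = stal_class S v \<Longrightarrow> count_list u = count_list v \<and> remdups u = remdups v"
proof -
  assume "stal_class S u = stal_class S v"
  then have "stal_eq S u v" unfolding stal_class_def stal_eq_def
    by (metis equivclp_refl mem_Collect_eq)
  then show ?thesis by (rule eq_inv)
qed



lemma filter_remdups_single:
  "(\<forall>b\<in>set w. Q b \<longrightarrow> count_list w b \<le> 1) \<Longrightarrow> filter Q w = filter Q (remdups w)"
proof (induction w)
  case Nil then show ?case by simp
next
  case (Cons a w)
  have h: "\<forall>b\<in>set w. Q b \<longrightarrow> count_list w b \<le> 1"
  proof (intro ballI impI)
    fix b assume b: "b \<in> set w" "Q b"
    then have "count_list (a # w) b \<le> 1" using Cons.prems by simp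
    then show "count_list w b \<le> 1" by (simp split: if_splits)
  qed
  show ?case
  proof (cases "a \<in> set w")
    case True
    then have "count_list w a \<ge> 1" by (metis count_list_0_iff less_one not_le)
    then have "\<not> Q a" using Cons.prems by auto
    then show ?thesis using True Cons.IH[OF h] by simp
  next
    case False
    then show ?thesis using Cons.IH[OF h] by simp
  qed
qed

lemma iota_char: "iota w = filter (\<lambda>a. count_list w a = 1) (remdups w)"
  unfolding iota_def by (rule filter_remdups_single) auto

lemma iota_distinct: "distinct (iota w)"
  by (simp add: iota_char)

lemma iota_inv: "count_list u = count_list v \<Longrightarrow> remdups u = remdups v \<Longrightarrow> iota u = iota v"
  by (simp add: iota_char)

definition rot :: "nat list \<Rightarrow> nat list \<Rightarrow> bool" where
  "rot a b \<longleftrightarrow> (\<exists>p q. a = p @ q \<and> b = q @ p)"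

lemma rot_iff: "rot a b \<longleftrightarrow> (\<exists>n. b = rotate n a)"
proof
  assume "rot a b"
  then obtain p q where "a = p @ q" "b = q @ p" unfolding rot_def by blast
  then show "\<exists>n. b = rotate n a" by (metis rotate_append)
next
  assume "\<exists>n. b = rotate n a"
  then obtain n where "b = rotate n a" by blast
  then have "a = take (n mod length a) a @ drop (n mod length a) a \<and> b = drop (n mod length a) a @ take (n mod length a) a"
    by (simp add: rotate_drop_take)
  then show "rot a b" unfolding rot_def by blast
qed

lemma rot_refl: "rot a a" unfolding rot_def by (metis append_Nil append_Nil2)

lemma rot_trans: "rot a b \<Longrightarrow> rot b c \<Longrightarrow> rot a c"
  unfolding rot_iff by (metis rotate_rotate)

lemma count_swap: "count_list (x @ y) = count_list (y @ x)"
  by (auto simp: fun_eq_iff)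

lemma iota_swap: "rot (iota (x @ y)) (iota (y @ x))"
proof -
  have "iota (y @ x) = filter (\<lambda>a. count_list (x @ y) a = 1) (y @ x)"
    unfolding iota_def using count_swap[of x y] by simp
  then show ?thesis unfolding rot_def iota_def by auto
qed

lemma conn_inv:
  assumes "K_conn S (stal_class S u) m" "u \<in> lists S"
  shows "\<exists>w\<in>lists S. m = stal_class S w \<and> count_list w = count_list u \<and> rot (iota u) (iota w)"
  using assms(1) unfolding K_conn_def
proof (induction rule: rtranclp_induct)
  case base
  then show ?case using assms(2) rot_refl by blast
next
  case (step m m')
  then obtain w where w: "w \<in> lists S" "m = stal_class S w" "count_list w = count_list u" "rot (iota u) (iota w)"
    by blast
  from step(2) obtain x y where xy: "x \<in> lists S" "y \<in> lists S" "m = stal_class S (x @ y)" "m' = stal_class S (y @ x)"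
    unfolding cshift_def by blast
  have i: "count_list w = count_list (x @ y) \<and> remdups w = remdups (x @ y)"
    using class_eq_inv w(2) xy(3) by metis
  then have "iota w = iota (x @ y)" by (metis iota_inv)
  then have "rot (iota u) (iota (y @ x))" using rot_trans[OF w(4)] iota_swap[of x y] by simp
  moreover have "count_list (y @ x) = count_list u"
  proof -
    have "count_list (y @ x) = count_list (x @ y)" by (rule count_swap[symmetric])
    also have "\<dots> = count_list w" using conjunct1[OF i] by (rule sym)
    also have "\<dots> = count_list u" by (rule w(3))
    finally show ?thesis .
  qed
  ultimately have "m' = stal_class S (y @ x) \<and> count_list (y @ x) = count_list u \<and> rot (iota u) (iota (y @ x))"
    using xy(4) by (intro conjI)
  moreover have "y @ x \<in> lists S" using xy by simp
  ultimately show ?case by (rule bexI)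
qed

lemma conn_imp:
  assumes "K_conn S (stal_class S u) (stal_class S v)" "u \<in> lists S" "v \<in> lists S"
  shows "count_list u = count_list v \<and> rot (iota u) (iota v)"
proof -
  obtain w where w: "w\<in>lists S" "stal_class S v = stal_class S w" "count_list w = count_list u" "rot (iota u) (iota w)"
    using conn_inv[OF assms(1,2)] by blast
  then have "count_list v = count_list w \<and> remdups v = remdups w" using class_eq_inv by metis
  then show ?thesis using w by (metis iota_inv)
qed



lemma remdups_remdups: "remdups (remdups xs) = remdups xs" by simp

lemma remdups_replicate_pos: "n > 0 \<Longrightarrow> remdups (replicate n a) = [a]"
  by (induction n) auto

lemma remdups_concat_rep:
  "distinct xs \<Longrightarrow> \<forall>b\<in>set xs. f b > 0 \<Longrightarrow> remdups (concat (map (\<lambda>b. replicate (f b) b) xs)) = xs"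
proof (induction xs)
  case Nil then show ?case by simp
next
  case (Cons a xs)
  have "set (concat (map (\<lambda>b. replicate (f b) b) xs)) \<subseteq> set xs" by auto
  then have "a \<notin> set (concat (map (\<lambda>b. replicate (f b) b) xs))" using Cons.prems by auto
  then show ?case using Cons by (simp add: remdups_app remdups_replicate_pos)
qed

lemma set_concat_rep:
  "\<forall>b\<in>set xs. f b > 0 \<Longrightarrow> set (concat (map (\<lambda>b. replicate (f b) b) xs)) = set xs"
  by auto

lemma path3:
  assumes u: "u \<in> lists S" and v: "v \<in> lists S" and cuv: "count_list u = count_list v"
    and pu: "iota u = p @ q" and pv: "iota v = q @ p"
  shows "(cshift S ^^ 3) (stal_class S u) (stal_class S v)"
proof -
  define c where "c = count_list u"
  define rl where "rl = filter (\<lambda>b. c b \<ge> 2) (remdups u)"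
  define E where "E = concat (map (\<lambda>b. replicate (c b - 1) b) rl)"
  have drl: "distinct rl" unfolding rl_def by simp
  have setrl: "set rl = {b \<in> set u. c b \<ge> 2}" unfolding rl_def by auto
  have pos: "\<forall>b\<in>set rl. c b - 1 > 0" using setrl by auto
  have setE: "set E = set rl" unfolding E_def using pos by (rule set_concat_rep)
  have remE: "remdups E = rl" unfolding E_def using drl pos by (rule remdups_concat_rep)
  have cntE: "\<And>a. count_list E a = (if a \<in> set rl then c a - 1 else 0)"
    unfolding E_def using drl by (rule count_list_concat_rep)
  have cnt_rl: "\<And>a. count_list rl a = (if a \<in> set rl then 1 else 0)"
    using drl by (rule count_list_distinct)
  have inset: "\<And>a w. count_list w = c \<Longrightarrow> a \<in> set w \<longleftrightarrow> c a > 0"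
    by (metis count_list_0_iff gr0I less_numeral_extra(3))
  have Els: "E \<in> lists S" using setE setrl u by auto
  have rlls: "rl \<in> lists S" using setrl u by auto
  have G: "count_list (remdups w @ E) = c \<and> remdups (remdups w @ E) = iota w @ rl
      \<and> stal_class S w = stal_class S (E @ remdups w)"
    if w: "w \<in> lists S" "count_list w = c" for w
  proof -
    have sw: "\<And>a. a \<in> set w \<longleftrightarrow> c a > 0" using inset w(2) by blast
    have su: "\<And>a. a \<in> set u \<longleftrightarrow> c a > 0" using inset c_def by blast
    have c1: "count_list (remdups w @ E) = c"
    proof
      fix a
      show "count_list (remdups w @ E) a = c a"
        using sw[of a] su[of a] by (auto simp: cntE setrl count_list_distinct)
    qed
    have f: "filter (\<lambda>x. x \<notin> set E) (remdups w) = iota w"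
    proof -
      have "iota w = filter (\<lambda>a. c a = 1) (remdups w)" using iota_char[of w] w(2) by simp
      moreover have "filter (\<lambda>x. x \<notin> set E) (remdups w) = filter (\<lambda>a. c a = 1) (remdups w)"
      proof (rule filter_cong[OF refl])
        fix x assume "x \<in> set (remdups w)"
        then have "c x > 0" using sw[of x] by simp
        moreover have "x \<in> set E \<longleftrightarrow> c x \<ge> 2" using setE setrl su[of x] by auto
        ultimately show "(x \<notin> set E) = (c x = 1)" by auto
      qed
      ultimately show ?thesis by simp
    qed
    have c2: "remdups (remdups w @ E) = iota w @ rl"
      by (simp add: remdups_app remdups_remdups f remE)
    have "remdups (E @ remdups w) = remdups (remdups w)"
    proof (rule remdups_append)
      show "set E \<subseteq> set (remdups w)"
      proof
        fix x assume "x \<in> set E"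
        then have "x \<in> set u" "c x \<ge> 2" using setE setrl by auto
        then show "x \<in> set (remdups w)" using sw[of x] su[of x] by simp
      qed
    qed
    then have "remdups (E @ remdups w) = remdups w" by (simp only: remdups_remdups)
    moreover have "count_list (E @ remdups w) = count_list w"
      using c1 w(2) count_swap by metis
    moreover have "E @ remdups w \<in> lists S" using Els w(1) by auto
    ultimately have "stal_class S w = stal_class S (E @ remdups w)"
      using class_eq_iff w(1) by auto
    then show ?thesis using c1 c2 by blast
  qed
  have Gu: "count_list (remdups u @ E) = c" "remdups (remdups u @ E) = p @ q @ rl"
      "stal_class S u = stal_class S (E @ remdups u)"
    using G[OF u c_def[symmetric]] pu by auto
  have Gv: "count_list (remdups v @ E) = c" "remdups (remdups v @ E) = q @ p @ rl"
      "stal_class S v = stal_class S (E @ remdups v)"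
    using G[OF v] cuv c_def pv by auto
  have iotac: "\<And>a. count_list p a + count_list q a = (if c a = 1 then 1 else 0)"
  proof -
    fix a
    have "count_list (iota u) a = (if c a = 1 then c a else 0)"
      unfolding iota_def c_def by (simp add: count_list_filter)
    then show "count_list p a + count_list q a = (if c a = 1 then 1 else 0)"
      using pu by auto
  qed
  have dpq: "distinct (p @ q @ rl)"
  proof -
    have "distinct (p @ q)" using iota_distinct pu by metis
    moreover have "set (p @ q) \<subseteq> {b. c b = 1}"
    proof -
      have "set (iota u) \<subseteq> {b. c b = 1}" unfolding iota_def c_def by auto
      then show ?thesis using pu by simp
    qed
    ultimately show ?thesis using drl setrl by auto
  qed
  have c3: "count_list (p @ E @ q @ rl) = c"
  proof
    fix a
    have s: "count_list (p @ E @ q @ rl) a = (count_list p a + count_list q a) + count_list E a + count_list rl a"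
      by simp
    show "count_list (p @ E @ q @ rl) a = c a"
    proof (cases "a \<in> set rl")
      case True
      then have "c a \<ge> 2" using setrl by auto
      then show ?thesis using s iotac[of a] cntE[of a] cnt_rl[of a] True by simp
    next
      case False
      have "c a \<le> 1"
      proof (rule ccontr)
        assume "\<not> c a \<le> 1"
        moreover then have "a \<in> set u" using count_list_0_iff[of u a] c_def by auto
        ultimately show False using False setrl by auto
      qed
      then have "c a = 0 \<or> c a = 1" by auto
      then show ?thesis using s iotac[of a] cntE[of a] cnt_rl[of a] False by auto
    qed
  qed
  have c4: "count_list (q @ rl @ p @ E) = c"
  proof
    fix a
    have "count_list (q @ rl @ p @ E) a = count_list (p @ E @ q @ rl) a" by simp
    then show "count_list (q @ rl @ p @ E) a = c a" using c3 by simp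
  qed
  have r3: "remdups (p @ E @ q @ rl) = p @ q @ rl"
  proof -
    have "remdups (E @ q @ rl) = remdups (q @ rl)"
      by (rule remdups_append) (use setE in auto)
    then have "remdups (E @ q @ rl) = q @ rl" using dpq by simp
    moreover have "filter (\<lambda>x. x \<notin> set (E @ q @ rl)) (remdups p) = p"
      using dpq setE by (auto simp: filter_id_conv distinct_remdups_id)
    ultimately show ?thesis by (simp add: remdups_app)
  qed
  have r4: "remdups (q @ rl @ p @ E) = q @ p @ rl"
  proof -
    have e: "q @ rl @ p @ E = (q @ rl @ p) @ E" by simp
    have A: "remdups (q @ rl @ p) = q @ rl @ p" using dpq by auto
    moreover have B: "filter (\<lambda>x. x \<notin> set E) (q @ rl @ p) = q @ p"
    proof -
      have "filter (\<lambda>x. x \<notin> set rl) q = q" "filter (\<lambda>x. x \<notin> set rl) p = p"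
        "filter (\<lambda>x. x \<notin> set rl) rl = []"
        using dpq by (auto simp: filter_id_conv filter_empty_conv)
      then show ?thesis using setE by simp
    qed
    have X: "remdups ((q @ rl @ p) @ E) = filter (\<lambda>x. x \<notin> set E) (remdups (q @ rl @ p)) @ remdups E"
      by (rule remdups_app)
    show ?thesis unfolding e X A B remE by simp
  qed
  have pls: "p \<in> lists S" "q \<in> lists S"
  proof -
    have "set (iota u) \<subseteq> set u" unfolding iota_def by auto
    then show "p \<in> lists S" "q \<in> lists S" using pu u by auto
  qed
  have ru: "remdups u \<in> lists S" "remdups v \<in> lists S" using u v by auto
  have w1: "p @ E @ q @ rl \<in> lists S" "q @ rl @ p @ E \<in> lists S"
    using pls Els rlls by auto
  have s1: "cshift S (stal_class S u) (stal_class S (remdups u @ E))"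
    unfolding cshift_def using Gu(3) Els ru by blast
  have eq1: "stal_class S (remdups u @ E) = stal_class S ((p @ E) @ (q @ rl))"
    using class_eq_iff[of "remdups u @ E" S "p @ E @ q @ rl"] Gu c3 r3 ru Els w1 by auto
  have eq2: "stal_class S ((q @ rl) @ (p @ E)) = stal_class S (remdups v @ E)"
    using class_eq_iff[of "q @ rl @ p @ E" S "remdups v @ E"] Gv c4 r4 ru Els w1 by auto
  have s2: "cshift S (stal_class S (remdups u @ E)) (stal_class S (remdups v @ E))"
    unfolding cshift_def eq1 eq2[symmetric]
    by (rule bexI[of _ "p @ E"], rule bexI[of _ "q @ rl"]) (use pls Els rlls in auto)
  have s3: "cshift S (stal_class S (remdups v @ E)) (stal_class S v)"
    unfolding cshift_def using Gv(3) Els ru by blast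
  have "(cshift S ^^ Suc 0) (stal_class S (remdups v @ E)) (stal_class S v)" unfolding relpowp_Suc_0 by (rule s3)
  then have "(cshift S ^^ Suc (Suc 0)) (stal_class S (remdups u @ E)) (stal_class S v)"
    by (rule relpowp_Suc_I2[where P="cshift S", OF s2])
  then have "(cshift S ^^ Suc (Suc (Suc 0))) (stal_class S u) (stal_class S v)"
    by (rule relpowp_Suc_I2[where P="cshift S", OF s1])
  then show ?thesis by (simp add: numeral_3_eq_3)
qed



lemma eq_class: "stal_eq S u v \<Longrightarrow> stal_class S u = stal_class S v"
  unfolding stal_class_def stal_eq_def by (auto intro: equivclp_trans equivclp_sym)

lemma cshift_refl: "w \<in> lists S \<Longrightarrow> cshift S (stal_class S w) (stal_class S w)"
  unfolding cshift_def by (rule bexI[of _ w], rule bexI[of _ "[]"]) auto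

lemma relpow3_dist: "(cshift S ^^ 3) s t \<Longrightarrow> K_dist S s t \<le> 3"
  unfolding K_dist_def by (rule Least_le)

lemma elemsE: "s \<in> stal_elems S \<Longrightarrow> (\<And>u. u \<in> lists S \<Longrightarrow> s = stal_class S u \<Longrightarrow> P) \<Longrightarrow> P"
  unfolding stal_elems_def by blast

lemma dist_le3:
  assumes "s \<in> stal_elems S" "t \<in> stal_elems S" "K_conn S s t"
  shows "K_dist S s t \<le> 3"
proof -
  obtain u where u: "u \<in> lists S" "s = stal_class S u" using assms(1) by (rule elemsE)
  obtain v where v: "v \<in> lists S" "t = stal_class S v" using assms(2) by (rule elemsE)
  have "count_list u = count_list v \<and> rot (iota u) (iota v)"
    using conn_imp assms(3) u v by metis
  then obtain p q where "count_list u = count_list v" "iota u = p @ q" "iota v = q @ p"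
    unfolding rot_def by blast
  then have "(cshift S ^^ 3) s t" using path3 u v by metis
  then show ?thesis by (rule relpow3_dist)
qed

lemma part1:
  assumes "u \<in> lists S" "v \<in> lists S"
  shows "K_conn S (stal_class S u) (stal_class S v) \<longleftrightarrow>
    ((\<forall>a. count_list u a = count_list v a) \<and> (\<exists>p q. iota u = p @ q \<and> iota v = q @ p))"
proof
  assume "K_conn S (stal_class S u) (stal_class S v)"
  then have "count_list u = count_list v \<and> rot (iota u) (iota v)" using conn_imp assms by metis
  then show "(\<forall>a. count_list u a = count_list v a) \<and> (\<exists>p q. iota u = p @ q \<and> iota v = q @ p)"
    unfolding rot_def by auto
next
  assume h: "(\<forall>a. count_list u a = count_list v a) \<and> (\<exists>p q. iota u = p @ q \<and> iota v = q @ p)"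
  then have c: "count_list u = count_list v" by auto
  from h obtain p q where "iota u = p @ q" "iota v = q @ p" by blast
  then have "(cshift S ^^ 3) (stal_class S u) (stal_class S v)" using path3 assms c by metis
  then show "K_conn S (stal_class S u) (stal_class S v)" unfolding K_conn_def
    by (rule relpowp_imp_rtranclp)
qed

lemma len3: "set w \<subseteq> {1,2,3::nat} \<Longrightarrow> length w = count_list w 1 + count_list w 2 + count_list w 3"
  by (induction w) auto

lemma uniq1: assumes "count_list w = count_list [1,1,2,3::nat]" "remdups w = [1,2,3]"
  shows "w = [1,1,2,3]"
proof -
  have s: "set w \<subseteq> {1,2,3}" using assms(2) by (metis set_remdups set_simps order_refl insert_commute)
  have "length w = Suc (Suc (Suc (Suc 0)))" using len3[OF s] assms(1) by simp
  then obtain a b c d where w: "w = [a,b,c,d]"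
    by (auto simp: length_Suc_conv)
  have abcd: "a \<in> {1,2,3}" "b \<in> {1,2,3}" "c \<in> {1,2,3}" "d \<in> {1,2,3}" using s w by auto
  have r: "remdups [a,b,c,d] = [1,2,3]" and cn: "count_list [a,b,c,d] 1 = 2" using assms w by auto
  show ?thesis using abcd r cn unfolding w by auto
qed

lemma uniq2: assumes "count_list w = count_list [1,1,3,2::nat]" "remdups w = [1,3,2]"
  shows "w = [1,1,3,2]"
proof -
  have s: "set w \<subseteq> {1,2,3}" using assms(2) by (metis set_remdups set_simps order_refl insert_commute)
  have "length w = Suc (Suc (Suc (Suc 0)))" using len3[OF s] assms(1) by simp
  then obtain a b c d where w: "w = [a,b,c,d]"
    by (auto simp: length_Suc_conv)
  have abcd: "a \<in> {1,2,3}" "b \<in> {1,2,3}" "c \<in> {1,2,3}" "d \<in> {1,2,3}" using s w by auto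
  have r: "remdups [a,b,c,d] = [1,3,2]" and cn: "count_list [a,b,c,d] 1 = 2" using assms w by auto
  show ?thesis using abcd r cn unfolding w by auto
qed



lemma nbr1:
  assumes "cshift S (stal_class S [1,1,2,3]) m"
  shows "m \<in> stal_class S ` {[1,1,2,3],[1,2,3,1],[2,3,1,1],[3,1,1,2]}"
proof -
  obtain x y where xy: "stal_class S [1,1,2,3] = stal_class S (x @ y)" "m = stal_class S (y @ x)"
    using assms unfolding cshift_def by blast
  have "count_list [1,1,2,3] = count_list (x @ y) \<and> remdups [1,1,2,3::nat] = remdups (x @ y)"
    using class_eq_inv[OF xy(1)] .
  note h = this
  have e: "remdups ([1,1,2,3]::nat list) = [1,2,3]" by simp
  have "x @ y = [1,1,2,3]"
  proof (rule uniq1)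
    show "count_list (x @ y) = count_list [1,1,2,3]" using conjunct1[OF h] by (rule sym)
    show "remdups (x @ y) = [1,2,3]" by (rule trans[OF sym[OF conjunct2[OF h]] e])
  qed
  then have "y @ x \<in> {[1,1,2,3],[1,2,3,1],[2,3,1,1],[3,1,1,2]}"
    by (auto simp: append_eq_Cons_conv)
  then show ?thesis using xy(2) by blast
qed

lemma nbr2:
  assumes "cshift S m (stal_class S [1,1,3,2])"
  shows "m \<in> stal_class S ` {[1,1,3,2],[1,3,2,1],[3,2,1,1],[2,1,1,3]}"
proof -
  obtain x y where xy: "m = stal_class S (x @ y)" "stal_class S [1,1,3,2] = stal_class S (y @ x)"
    using assms unfolding cshift_def by blast
  have "count_list [1,1,3,2] = count_list (y @ x) \<and> remdups [1,1,3,2::nat] = remdups (y @ x)"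
    using class_eq_inv[OF xy(2)] .
  note h = this
  have e: "remdups ([1,1,3,2]::nat list) = [1,3,2]" by simp
  have "y @ x = [1,1,3,2]"
  proof (rule uniq2)
    show "count_list (y @ x) = count_list [1,1,3,2]" using conjunct1[OF h] by (rule sym)
    show "remdups (y @ x) = [1,3,2]" by (rule trans[OF sym[OF conjunct2[OF h]] e])
  qed
  then have "x @ y \<in> {[1,1,3,2],[1,3,2,1],[3,2,1,1],[2,1,1,3]}"
    by (auto simp: append_eq_Cons_conv)
  then show ?thesis using xy(1) by blast
qed

lemma disj12:
  assumes "m \<in> stal_class S ` {[1,1,2,3],[1,2,3,1],[2,3,1,1],[3,1,1,2]}"
    and "m \<in> stal_class S ` {[1,1,3,2],[1,3,2,1],[3,2,1,1],[2,1,1,3]}"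
  shows False
proof -
  obtain r1 where r1: "r1 \<in> {[1,1,2,3],[1,2,3,1],[2,3,1,1],[3,1,1,2]}" "m = stal_class S r1" using assms(1) by blast
  obtain r2 where r2: "r2 \<in> {[1,1,3,2],[1,3,2,1],[3,2,1,1],[2,1,1,3]}" "m = stal_class S r2" using assms(2) by blast
  have "remdups r1 = remdups r2" using class_eq_inv[of S r1 r2] r1(2) r2(2) by simp
  then show False using r1(1) r2(1) by auto
qed

lemma example3:
  assumes "1 \<in> S" "2 \<in> S" "3 \<in> S"
  shows "K_conn S (stal_class S [1,1,2,3]) (stal_class S [1,1,3,2]) \<and>
         K_dist S (stal_class S [1,1,2,3]) (stal_class S [1,1,3,2]) = 3"
proof -
  let ?s = "stal_class S [1,1,2,3]" and ?t = "stal_class S [1,1,3,2]"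
  have l: "[1,1,2,3] \<in> lists S" "[1,1,3,2] \<in> lists S" using assms by auto
  have c: "count_list [1,1,2,3::nat] = count_list [1,1,3,2]" by (auto simp: fun_eq_iff)
  have i: "iota [1,1,2,3] = [2] @ [3]" "iota [1,1,3,2] = [3] @ [2]" by (auto simp: iota_def)
  have p3: "(cshift S ^^ 3) ?s ?t" using path3[OF l c i] .
  then have conn: "K_conn S ?s ?t" unfolding K_conn_def by (rule relpowp_imp_rtranclp)
  have s1: "?s \<in> stal_class S ` {[1,1,2,3],[1,2,3,1],[2,3,1,1],[3,1,1,2]}" by blast
  have t2: "?t \<in> stal_class S ` {[1,1,3,2],[1,3,2,1],[3,2,1,1],[2,1,1,3]}" by blast
  have ge: "3 \<le> k" if hk: "(cshift S ^^ k) ?s ?t" for k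
  proof (rule ccontr)
    assume "\<not> 3 \<le> k"
    then have "k = 0 \<or> k = Suc 0 \<or> k = Suc (Suc 0)" by auto
    then show False
    proof (elim disjE)
      assume "k = 0"
      then have "?s = ?t" using hk by (auto elim: relpowp_0_E)
      then have "?t \<in> stal_class S ` {[1,1,2,3],[1,2,3,1],[2,3,1,1],[3,1,1,2]}" using s1 by simp
      then show False using t2 by (rule disj12)
    next
      assume "k = Suc 0"
      then have "cshift S ?s ?t" using hk by (simp only: relpowp_Suc_0)
      then show False by (rule disj12[OF nbr1 t2])
    next
      assume "k = Suc (Suc 0)"
      then obtain m where "cshift S ?s m" "(cshift S ^^ Suc 0) m ?t"
        using relpowp_Suc_D2[OF hk[unfolded \<open>k = Suc (Suc 0)\<close>]] by blast
      then have "cshift S ?s m" "cshift S m ?t" by (simp_all only: relpowp_Suc_0)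
      then show False by (rule disj12[OF nbr1 nbr2])
    qed
  qed
  have "K_dist S ?s ?t = 3" unfolding K_dist_def
    by (rule Least_equality) (use p3 ge in auto)
  then show ?thesis using conn by simp
qed



lemma diam3:
  assumes "1 \<in> S" "2 \<in> S" "3 \<in> S"
  shows "max_comp_diam S 3"
  unfolding max_comp_diam_def
proof (intro conjI ballI impI)
  fix s t assume "s \<in> stal_elems S" "t \<in> stal_elems S" "K_conn S s t"
  then show "K_dist S s t \<le> 3" by (rule dist_le3)
next
  have l: "[1,1,2,3] \<in> lists S" "[1,1,3,2] \<in> lists S" using assms by auto
  have "stal_class S [1,1,2,3] \<in> stal_elems S" "stal_class S [1,1,3,2] \<in> stal_elems S"
    unfolding stal_elems_def using l by blast+
  then show "\<exists>s\<in>stal_elems S. \<exists>t\<in>stal_elems S. K_conn S s t \<and> K_dist S s t = 3"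
    using example3[OF assms] by blast
qed

lemma two_class:
  assumes u: "u \<in> lists {1,2}"
  shows "stal_class {1,2} u = stal_class {1,2} (replicate (count_list u 1) 1 @ replicate (count_list u 2) 2)
       \<or> stal_class {1,2} u = stal_class {1,2} (replicate (count_list u 2) 2 @ replicate (count_list u 1) 1)"
proof -
  have cu: "stal_class {1,2} u = stal_class {1,2} (nf u)" by (rule eq_class[OF eq_nf[OF u]])
  define r where "r = remdups u"
  have dr: "distinct r" and sr: "set r \<subseteq> {1,2}" and sru: "set r = set u" using u by (auto simp: r_def)
  have nfu: "nf u = concat (map (\<lambda>a. replicate (count_list u a) a) r)" by (simp add: nf_def r_def)
  consider "r = []" | a where "r = [a]" | a b where "r = [a,b]" | a b c rest where "r = a # b # c # rest"
    by (metis list.exhaust)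
  then show ?thesis
  proof cases
    case 1
    then have "u = []" using r_def by simp
    then show ?thesis by simp
  next
    case (2 a)
    have su1: "set u = {a}" using sru 2 by simp
    have "a = 1 \<or> a = 2" using sr 2 by simp
    then show ?thesis
    proof
      assume a: "a = 1"
      then have "(2::nat) \<notin> set u" using su1 by simp
      then have "count_list u 2 = 0" by simp
      then have "nf u = replicate (count_list u 1) 1 @ replicate (count_list u 2) 2" using nfu 2 a by simp
      then show ?thesis using cu by simp
    next
      assume a: "a = 2"
      then have "(1::nat) \<notin> set u" using su1 by simp
      then have "count_list u 1 = 0" by simp
      then have "nf u = replicate (count_list u 1) 1 @ replicate (count_list u 2) 2" using nfu 2 a by simp
      then show ?thesis using cu by simp
    qed
  next
    case (3 a b)
    then have "(a = 1 \<and> b = 2) \<or> (a = 2 \<and> b = 1)" using sr dr by auto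
    then show ?thesis
    proof
      assume "a = 1 \<and> b = 2"
      then have "nf u = replicate (count_list u 1) 1 @ replicate (count_list u 2) 2" using nfu 3 by simp
      then show ?thesis using cu by simp
    next
      assume "a = 2 \<and> b = 1"
      then have "nf u = replicate (count_list u 2) 2 @ replicate (count_list u 1) 1" using nfu 3 by simp
      then show ?thesis using cu by simp
    qed
  next
    case (4 a b c rest)
    then show ?thesis using sr dr by auto
  qed
qed

lemma two_bound:
  assumes "s \<in> stal_elems {1,2}" "t \<in> stal_elems {1,2}" "K_conn {1,2} s t"
  shows "K_dist {1,2} s t \<le> 1"
proof -
  obtain u where u: "u \<in> lists {1,2}" "s = stal_class {1,2} u" using assms(1) by (rule elemsE)
  obtain v where v: "v \<in> lists {1,2}" "t = stal_class {1,2} v" using assms(2) by (rule elemsE)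
  have c: "count_list u = count_list v" using conn_imp assms(3) u v by metis
  define A where "A = stal_class {1,2::nat} (replicate (count_list u 1) 1 @ replicate (count_list u 2) 2)"
  define B where "B = stal_class {1,2::nat} (replicate (count_list u 2) 2 @ replicate (count_list u 1) 1)"
  have sAB: "s = A \<or> s = B" using two_class[OF u(1)] u(2) A_def B_def by simp
  have tAB: "t = A \<or> t = B" using two_class[OF v(1)] v(2) A_def B_def c by simp
  have l1: "replicate (count_list u 1) (1::nat) \<in> lists {1,2}" "replicate (count_list u 2) (2::nat) \<in> lists {1,2}"
    by auto
  have AB: "cshift {1,2} A B" unfolding A_def B_def cshift_def using l1 by blast
  have BA: "cshift {1,2} B A" unfolding A_def B_def cshift_def using l1 by blast
  have AA: "cshift {1,2} A A" unfolding A_def by (rule cshift_refl) (use l1 in auto)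
  have BB: "cshift {1,2} B B" unfolding B_def by (rule cshift_refl) (use l1 in auto)
  have "cshift {1,2} s t" using sAB tAB AB BA AA BB by auto
  then have "(cshift {1,2} ^^ Suc 0) s t" by (simp only: relpowp_Suc_0)
  then show ?thesis unfolding K_dist_def by (metis Least_le One_nat_def)
qed

lemma diam2: "max_comp_diam {1,2} 1"
  unfolding max_comp_diam_def
proof (intro conjI ballI impI)
  fix s t assume "s \<in> stal_elems {1,2}" "t \<in> stal_elems {1,2}" "K_conn {1,2} s t"
  then show "K_dist {1,2} s t \<le> 1" by (rule two_bound)
next
  let ?s = "stal_class {1,2} [1,2]" and ?t = "stal_class {1,2::nat} [2,1]"
  have e: "?s \<in> stal_elems {1,2}" "?t \<in> stal_elems {1,2}" unfolding stal_elems_def by auto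
  have cs: "cshift {1,2} ?s ?t" unfolding cshift_def
    by (rule bexI[of _ "[1]"], rule bexI[of _ "[2]"]) auto
  then have p1: "(cshift {1,2} ^^ Suc 0) ?s ?t" by (simp only: relpowp_Suc_0)
  have conn: "K_conn {1,2} ?s ?t" unfolding K_conn_def using cs by blast
  have ne: "?s \<noteq> ?t"
  proof
    assume "?s = ?t"
    then have "remdups [1,2::nat] = remdups [2,1]" using class_eq_inv by blast
    then show False by simp
  qed
  have "K_dist {1,2} ?s ?t = 1" unfolding K_dist_def
  proof (rule Least_equality)
    show "(cshift {1,2} ^^ 1) ?s ?t" using p1 by simp
  next
    fix k assume "(cshift {1,2} ^^ k) ?s ?t"
    then show "1 \<le> k" using ne by (cases k) (auto elim: relpowp_0_E)
  qed
  then show "\<exists>s\<in>stal_elems {1,2}. \<exists>t\<in>stal_elems {1,2}. K_conn {1,2} s t \<and> K_dist {1,2} s t = 1"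
    using e conn by blast
qed

lemma one_rep: "x \<in> lists {1} \<Longrightarrow> x = replicate (length x) (1::nat)"
  by (induction x) auto

lemma one_shift: "cshift {1} s t \<Longrightarrow> s = t"
proof -
  assume "cshift {1} s t"
  then obtain x y where xy: "x \<in> lists {1}" "y \<in> lists {1}" "s = stal_class {1} (x @ y)" "t = stal_class {1} (y @ x)"
    unfolding cshift_def by blast
  have "x @ y = y @ x" using one_rep[OF xy(1)] one_rep[OF xy(2)]
    by (metis add.commute replicate_add)
  then show ?thesis using xy by simp
qed

lemma diam1: "max_comp_diam {1} 0"
  unfolding max_comp_diam_def
proof (intro conjI ballI impI)
  fix s t assume h: "s \<in> stal_elems {1}" "t \<in> stal_elems {1}" "K_conn {1} s t"
  have "(cshift {1})\<^sup>*\<^sup>* s t" using h(3) unfolding K_conn_def .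
  then have "s = t"
    by (induction rule: rtranclp_induct) (rule refl, metis one_shift)
  have "(cshift {1} ^^ 0) s t" using \<open>s = t\<close> by (simp add: relpowp_0_I)
  then show "K_dist {1} s t \<le> 0" unfolding K_dist_def by (metis Least_le)
next
  let ?s = "stal_class {1} []"
  have e: "?s \<in> stal_elems {1}" unfolding stal_elems_def by auto
  have "(cshift {1} ^^ 0) ?s ?s" by (rule relpowp_0_I)
  then have "K_dist {1} ?s ?s = 0" unfolding K_dist_def by (metis Least_le le_zero_eq)
  moreover have "K_conn {1} ?s ?s" unfolding K_conn_def by simp
  ultimately show "\<exists>s\<in>stal_elems {1}. \<exists>t\<in>stal_elems {1}. K_conn {1} s t \<and> K_dist {1} s t = 0"
    using e by blast
qed

theorem mainTheorem6:
  shows "(\<forall>u\<in>lists alphA. \<forall>v\<in>lists alphA.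
            K_conn alphA (stal_class alphA u) (stal_class alphA v) \<longleftrightarrow>
              ((\<forall>a. count_list u a = count_list v a) \<and>
               (\<exists>p q. iota u = p @ q \<and> iota v = q @ p)))
       \<and> max_comp_diam alphA 3
       \<and> (\<forall>n\<ge>3. max_comp_diam (alphAn n) 3)
       \<and> max_comp_diam (alphAn 2) 1
       \<and> max_comp_diam (alphAn 1) 0"
proof (intro conjI allI impI ballI)
  fix u v assume "u \<in> lists alphA" "v \<in> lists alphA"
  then show "K_conn alphA (stal_class alphA u) (stal_class alphA v) \<longleftrightarrow>
              ((\<forall>a. count_list u a = count_list v a) \<and> (\<exists>p q. iota u = p @ q \<and> iota v = q @ p))"
    by (rule part1)
next
  show "max_comp_diam alphA 3" by (rule diam3) (auto simp: alphA_def)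
next
  fix n :: nat assume "3 \<le> n"
  then show "max_comp_diam (alphAn n) 3" by (intro diam3) (auto simp: alphAn_def)
next
  have "alphAn 2 = {1,2}" by (auto simp: alphAn_def)
  then show "max_comp_diam (alphAn 2) 1" using diam2 by simp
next
  have "alphAn 1 = {1}" by (auto simp: alphAn_def)
  then show "max_comp_diam (alphAn 1) 0" using diam1 by simp
qed


end
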